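(* Let $X$ be a real random variable with $\mathbb{E}[e^X]=1$ and cumulative distribution function $F$, and assume there exists $\epsilon>0$ with $\mathbb{E}[e^{(1+\epsilon)X}]<\infty$. Let $c(k)=\int_k^\infty(e^x-e^k)\,dF(x)$ and let $V(k)$ be the implied volatility, i.e. the unique value with $c_{BS}(k,V(k))=c(k)$. If $-\log c\in R_\alpha$ for some $\alpha\ge1$, then as $k\to\infty$ $$\frac{\log c(k)}{k}=-\frac{k}{2V(k)^2}+\frac12-\frac{V(k)^2}{8k}+O\!\left(\frac{\log k}{k}\right)$$ and $$\frac{V(k)^2}{k}\sim\psi\!\left(\frac{-\log c(k)}{k}\right).$$
   Context: $c_{BS}(k,\sigma)=\Phi(d_1)-e^k\Phi(d_2)$ with $d_{1,2}=-k/\sigma\pm\sigma/2$, $\Phi$ the standard normal distribution function. $\psi:[0,\infty]\to[0,2]$, $\psi[x]=2-4\left(\sqrt{x^2+x}-x\right)$. A measurable function $g$, positive for large $x$, is in $R_\alpha$ if $\lim_{x\to\infty}g(\lambda x)/g(x)=\lambda^\alpha$ for every $\lambda>0$. $g\sim h$ means $g(k)/h(k)\to1$ as $k\to\infty$. *)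

theory Defs
  imports "HOL-Probability.Probability" "HOL-Library.Landau_Symbols"
begin

definition Phi :: "real \<Rightarrow> real" where
  "Phi x = measure (density lborel std_normal_density) {..x}"

definition c_BS :: "real \<Rightarrow> real \<Rightarrow> real" where
  "c_BS k \<sigma> = Phi (- k / \<sigma> + \<sigma> / 2) - exp k * Phi (- k / \<sigma> - \<sigma> / 2)"

definition implied_vol :: "real \<Rightarrow> real \<Rightarrow> real" where
  "implied_vol k p = (THE \<sigma>. \<sigma> > 0 \<and> c_BS k \<sigma> = p)"

definition psi :: "real \<Rightarrow> real" where
  "psi x = 2 - 4 * (sqrt (x\<^sup>2 + x) - x)"

definition regvar :: "real \<Rightarrow> (real \<Rightarrow> real) \<Rightarrow> bool" where
  "regvar \<alpha> g \<longleftrightarrow> g \<in> borel_measurable borel \<and> (\<forall>\<^sub>F x in at_top. g x > 0) \<and>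
     (\<forall>t>0. ((\<lambda>x. g (t * x) / g x) \<longlongrightarrow> t powr \<alpha>) at_top)"

end

theory Submission
  imports Defs "HOL-Real_Asymp.Real_Asymp"
begin
abbreviation "NN \<equiv> density lborel (\<lambda>x. ennreal (std_normal_density x))"

lemma NN_real_dist: "real_distribution NN"
  unfolding real_distribution_def real_distribution_axioms_def
  using prob_space_normal_density by auto

lemma Phi_cdf: "Phi x = cdf NN x"
  by (simp add: Phi_def cdf_def)

lemma Phi_lim_bot: "(Phi \<longlongrightarrow> 0) at_bot"
  using finite_borel_measure.cdf_lim_at_bot[OF real_distribution.finite_borel_measure_M[OF NN_real_dist]] by (simp add: Phi_cdf[abs_def])

lemma Phi_lim_top: "(Phi \<longlongrightarrow> 1) at_top"
  using real_distribution.cdf_lim_at_top_prob[OF NN_real_dist] by (simp add: Phi_cdf[abs_def])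

lemma Phi_nonneg: "Phi x \<ge> 0"
  by (simp add: Phi_def)

lemma Phi_le1: "Phi x \<le> 1"
  using real_distribution.cdf_bounded_prob[OF NN_real_dist] by (simp add: Phi_cdf)

lemma Phi_diff:
  assumes "a \<le> x"
  shows "Phi x - Phi a = integral {a..x} std_normal_density"
proof -
  interpret real_distribution NN by (rule NN_real_dist)
  have cont: "continuous_on {a..x} std_normal_density"
    unfolding std_normal_density_def by (intro continuous_intros) auto
  have hi: "(std_normal_density has_integral integral {a..x} std_normal_density) {a..x}"
    using integrable_continuous_interval[OF cont] by (simp add: has_integral_integral)
  have "emeasure NN {a<..x} = (\<integral>\<^sup>+ y. ennreal (std_normal_density y) * indicator {a<..x} y \<partial>lborel)"
    by (subst emeasure_density) auto
  also have "\<dots> = (\<integral>\<^sup>+ y. ennreal (std_normal_density y) * indicator {a..x} y \<partial>lborel)"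
    apply (rule nn_integral_cong_AE)
    using AE_lborel_singleton[of a] by eventually_elim (auto simp: indicator_def)
  also have "\<dots> = ennreal (integral {a..x} std_normal_density)"
    by (rule nn_integral_has_integral_lebesgue'[OF _ hi]) simp
  finally have e: "emeasure NN {a<..x} = ennreal (integral {a..x} std_normal_density)" .
  have nn: "integral {a..x} std_normal_density \<ge> 0"
    by (rule integral_nonneg[OF integrable_continuous_interval[OF cont]]) simp
  have "measure NN {a<..x} = integral {a..x} std_normal_density"
    using e nn by (simp add: measure_def)
  moreover have "Phi x - Phi a = measure NN {a<..x}"
    using cdf_diff_eq[of a x] assms by (cases "a = x") (auto simp: Phi_cdf)
  ultimately show ?thesis by simp
qed

lemma DERIV_Phi: "(Phi has_real_derivative std_normal_density t) (at t)"
proof -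
  let ?a = "t - 1" and ?b = "t + 1"
  have cont: "continuous_on {?a..?b} std_normal_density"
    unfolding std_normal_density_def by (intro continuous_intros) auto
  have d: "((\<lambda>x. Phi ?a + integral {?a..x} std_normal_density) has_real_derivative std_normal_density t) (at t within {?a..?b})"
    using integral_has_real_derivative[OF cont, of t] by (auto intro!: derivative_eq_intros)
  have d2: "(Phi has_real_derivative std_normal_density t) (at t within {?a..?b})"
    apply (rule has_field_derivative_transform_within[OF d, of 1])
  proof -
    fix x assume "x \<in> {?a..?b}"
    then have "?a \<le> x" by simp
    from Phi_diff[OF this] show "Phi ?a + integral {?a..x} std_normal_density = Phi x" by linarith
  qed auto
  then show ?thesis using at_within_Icc_at[of ?a t ?b] by simp
qed

lemma Phi_chain[derivative_intros]:
  "(g has_real_derivative g') (at x within S) \<Longrightarrow>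
   ((\<lambda>x. Phi (g x)) has_real_derivative std_normal_density (g x) * g') (at x within S)"
  by (rule DERIV_chain2[OF DERIV_Phi])

lemma phi_shift: "exp k * std_normal_density (- k / s - s / 2) = std_normal_density (- k / s + s / 2)"
  if "s > 0" for k s :: real
proof -
  have "(- k / s - s / 2)\<^sup>2 = (- k / s + s / 2)\<^sup>2 + 2 * k"
    using that by (simp add: power2_eq_square field_simps)
  then have "exp k * exp (- (- k / s - s / 2)\<^sup>2 / 2) = exp (- (- k / s + s / 2)\<^sup>2 / 2)"
    by (simp add: exp_add[symmetric] field_simps)
  then show ?thesis unfolding std_normal_density_def by (metis mult.left_commute)
qed

lemma DERIV_cBS:
  assumes "s > 0"
  shows "((\<lambda>s. c_BS k s) has_real_derivative std_normal_density (- k / s + s / 2)) (at s)"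
proof -
  have "((\<lambda>s. c_BS k s) has_real_derivative
     std_normal_density (- k / s + s / 2) * (k / s\<^sup>2 + 1/2) - exp k * (std_normal_density (- k / s - s / 2) * (k / s\<^sup>2 - 1/2))) (at s)"
    unfolding c_BS_def[abs_def] using assms
    by (auto intro!: derivative_eq_intros simp: power2_eq_square field_simps)
  also have "std_normal_density (- k / s + s / 2) * (k / s\<^sup>2 + 1/2) - exp k * (std_normal_density (- k / s - s / 2) * (k / s\<^sup>2 - 1/2))
     = std_normal_density (- k / s + s / 2)"
    using phi_shift[OF assms, of k] by (simp add: algebra_simps)
  finally show ?thesis .
qed

lemma cBS_lim0:
  assumes "k > 0"
  shows "((\<lambda>s. c_BS k s) \<longlongrightarrow> 0) (at_right 0)"
proof -
  have l1: "filterlim (\<lambda>s. - k / s + s / 2) at_bot (at_right 0)" using assms by real_asymp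
  have l2: "filterlim (\<lambda>s. - k / s - s / 2) at_bot (at_right 0)" using assms by real_asymp
  have "((\<lambda>s. Phi (- k / s + s / 2)) \<longlongrightarrow> 0) (at_right 0)"
    using filterlim_compose[OF Phi_lim_bot l1] .
  moreover have "((\<lambda>s. Phi (- k / s - s / 2)) \<longlongrightarrow> 0) (at_right 0)"
    using filterlim_compose[OF Phi_lim_bot l2] .
  ultimately have "((\<lambda>s. Phi (- k / s + s / 2) - exp k * Phi (- k / s - s / 2)) \<longlongrightarrow> 0 - exp k * 0) (at_right 0)"
    by (intro tendsto_intros)
  then show ?thesis unfolding c_BS_def by simp
qed

lemma cBS_limtop:
  assumes "k > 0"
  shows "((\<lambda>s. c_BS k s) \<longlongrightarrow> 1) at_top"
proof -
  have l1: "filterlim (\<lambda>s. - k / s + s / 2) at_top at_top" using assms by real_asymp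
  have l2: "filterlim (\<lambda>s. - k / s - s / 2) at_bot at_top" using assms by real_asymp
  have "((\<lambda>s. Phi (- k / s + s / 2)) \<longlongrightarrow> 1) at_top"
    using filterlim_compose[OF Phi_lim_top l1] .
  moreover have "((\<lambda>s. Phi (- k / s - s / 2)) \<longlongrightarrow> 0) at_top"
    using filterlim_compose[OF Phi_lim_bot l2] .
  ultimately have "((\<lambda>s. Phi (- k / s + s / 2) - exp k * Phi (- k / s - s / 2)) \<longlongrightarrow> 1 - exp k * 0) at_top"
    by (intro tendsto_intros)
  then show ?thesis unfolding c_BS_def by simp
qed

lemma phi_pos: "std_normal_density x > 0"
  by (simp add: normal_density_pos)

lemma cBS_strict_mono:
  assumes "0 < a" "a < b"
  shows "c_BS k a < c_BS k b"
  apply (rule DERIV_pos_imp_increasing[OF assms(2)])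
  using DERIV_cBS phi_pos assms by (meson less_le_trans)

lemma cBS_mono:
  assumes "0 < a" "a \<le> b"
  shows "c_BS k a \<le> c_BS k b"
  using cBS_strict_mono[of a b k] assms by (cases "a = b") auto

lemma cBS_pos:
  assumes "k > 0" "s > 0"
  shows "c_BS k s > 0"
proof -
  have "0 \<le> c_BS k (s/2)"
  proof (rule tendsto_upperbound[OF cBS_lim0[OF assms(1)]])
    have "c_BS k y \<le> c_BS k (s / 2)" if "0 < y" "y < s/2" for y
      using cBS_mono[of y "s/2" k] that by simp
    then show "\<forall>\<^sub>F x in at_right 0. c_BS k x \<le> c_BS k (s / 2)"
      unfolding eventually_at_right_field using assms
      by (intro exI[of _ "s/2"]) (auto simp: field_simps)
  qed simp
  also have "\<dots> < c_BS k s" using assms by (intro cBS_strict_mono) auto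
  finally show ?thesis .
qed

lemma cBS_lt1:
  assumes "k > 0" "s > 0"
  shows "c_BS k s < 1"
proof -
  have "c_BS k (2 * s) \<le> 1"
  proof (rule tendsto_lowerbound[OF cBS_limtop[OF assms(1)]])
    show "\<forall>\<^sub>F x in at_top. c_BS k (2 * s) \<le> c_BS k x"
      unfolding eventually_at_top_linorder using assms
      by (intro exI[of _ "2 * s"]) (auto intro!: cBS_mono)
  qed simp
  moreover have "c_BS k s < c_BS k (2 * s)" using assms by (intro cBS_strict_mono) auto
  ultimately show ?thesis by simp
qed

lemma implied_vol_ok:
  assumes "k > 0" "0 < p" "p < 1"
  shows "implied_vol k p > 0 \<and> c_BS k (implied_vol k p) = p"
proof -
  have ex: "\<exists>s>0. c_BS k s = p"
  proof -
    have "\<forall>\<^sub>F s in at_right 0. c_BS k s < p"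
      using order_tendstoD(2)[OF cBS_lim0[OF assms(1)] assms(2)] .
    then obtain a where a: "a > 0" "c_BS k a < p"
      unfolding eventually_at_right_field by (metis field_lbound_gt_zero less_eq_real_def order_less_le_trans zero_less_one)
    have "\<forall>\<^sub>F s in at_top. p < c_BS k s"
      using order_tendstoD(1)[OF cBS_limtop[OF assms(1)] assms(3)] .
    then obtain b where b: "\<And>s. s \<ge> b \<Longrightarrow> p < c_BS k s"
      unfolding eventually_at_top_linorder by auto
    define b' where "b' = max a b"
    have "a \<le> b'" "p < c_BS k b'" using b by (auto simp: b'_def)
    have cont: "continuous_on {a..b'} (\<lambda>s. c_BS k s)"
    proof (intro continuous_at_imp_continuous_on ballI)
      fix x assume "x \<in> {a..b'}"
      then have "x > 0" using a(1) by auto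
      then show "isCont (\<lambda>s. c_BS k s) x" using DERIV_cBS[of x k] DERIV_isCont by blast
    qed
    from IVT'[of "\<lambda>s. c_BS k s", OF _ _ _ cont, of p] a \<open>a \<le> b'\<close> \<open>p < c_BS k b'\<close>
    obtain x where "a \<le> x" "x \<le> b'" "c_BS k x = p" by auto
    then show ?thesis using a by (intro exI[of _ x]) auto
  qed
  have uniq: "s = t" if "s > 0" "c_BS k s = p" "t > 0" "c_BS k t = p" for s t
    using cBS_strict_mono[of s t k] cBS_strict_mono[of t s k] that by (cases s t rule: linorder_cases) auto
  have "implied_vol k p > 0 \<and> c_BS k (implied_vol k p) = p"
    unfolding implied_vol_def
    apply (rule theI')
    using ex uniq by blast
  then show ?thesis .
qed

lemma d_mono:
  fixes k s t :: real
  assumes "k > 0" "0 < s" "s \<le> t"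
  shows "- k / s + s / 2 \<le> - k / t + t / 2"
proof -
  have "k / t \<le> k / s" using assms by (intro divide_left_mono) (auto intro: mult_pos_pos)
  then show ?thesis using assms by simp
qed

lemma d_nonpos:
  fixes k s :: real
  assumes "k > 0" "0 < s" "s\<^sup>2 \<le> 2 * k"
  shows "- k / s + s / 2 \<le> 0"
proof -
  have "- k / s + s / 2 = (s\<^sup>2 - 2 * k) / (2 * s)" using assms by (simp add: field_simps power2_eq_square)
  also have "\<dots> \<le> 0" using assms by (intro divide_nonpos_pos) auto
  finally show ?thesis .
qed

lemma phi_mono_neg:
  fixes x y :: real
  assumes "x \<le> y" "y \<le> 0"
  shows "std_normal_density x \<le> std_normal_density y"
proof -
  have "y\<^sup>2 \<le> x\<^sup>2" using assms by (simp add: power2_eq_square mult_mono')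
    (smt (verit, ccfv_threshold) assms mult_le_cancel_left mult_le_cancel_right)
  then show ?thesis unfolding std_normal_density_def by (intro mult_left_mono) auto
qed


lemma cBS_upper:
  assumes k: "k > 0" and s: "s > 0" and sk: "s\<^sup>2 \<le> 2 * k"
  shows "c_BS k s \<le> s * std_normal_density (- k / s + s / 2)"
proof -
  define C where "C = std_normal_density (- k / s + s / 2)"
  define h where "h = (\<lambda>x. c_BS k x - x * C)"
  have dn: "- k / s + s / 2 \<le> 0" using d_nonpos[OF k s sk] .
  have hmono: "h s \<le> h x" if "0 < x" "x \<le> s" for x
  proof (rule DERIV_nonpos_imp_nonincreasing[OF that(2)])
    fix y assume y: "x \<le> y" "y \<le> s"
    have "(h has_real_derivative std_normal_density (- k / y + y / 2) - C) (at y)"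
      unfolding h_def using that y by (auto intro!: derivative_eq_intros DERIV_cBS)
    moreover have "std_normal_density (- k / y + y / 2) \<le> C"
      unfolding C_def using that y by (intro phi_mono_neg d_mono dn k) auto
    ultimately show "\<exists>D. (h has_real_derivative D) (at y) \<and> D \<le> 0" by force
  qed
  have lim0: "(h \<longlongrightarrow> 0 - 0 * C) (at_right 0)"
    unfolding h_def by (intro tendsto_intros cBS_lim0 k)
  then have lim: "(h \<longlongrightarrow> 0) (at_right 0)" by simp
  have "h s \<le> 0"
  proof (rule tendsto_lowerbound[OF lim])
    show "\<forall>\<^sub>F x in at_right 0. h s \<le> h x"
      unfolding eventually_at_right_field using s hmono by (intro exI[of _ s]) auto
  qed simp
  then show ?thesis unfolding h_def C_def by simp
qed

lemma cBS_lower: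
  assumes k: "k > 0" and dl: "0 < \<delta>" "\<delta> < s" and sk: "s\<^sup>2 \<le> 2 * k"
  shows "\<delta> * std_normal_density (- k / (s - \<delta>) + (s - \<delta>) / 2) \<le> c_BS k s"
proof -
  define C where "C = std_normal_density (- k / (s - \<delta>) + (s - \<delta>) / 2)"
  define h where "h = (\<lambda>x. c_BS k x - x * C)"
  have s: "s > 0" using dl by simp
  have dn: "- k / s + s / 2 \<le> 0" using d_nonpos[OF k s sk] .
  have "h (s - \<delta>) \<le> h s"
  proof (rule DERIV_nonneg_imp_nondecreasing[of "s - \<delta>" s])
    fix y assume y: "s - \<delta> \<le> y" "y \<le> s"
    have "(h has_real_derivative std_normal_density (- k / y + y / 2) - C) (at y)"
      unfolding h_def using dl y by (auto intro!: derivative_eq_intros DERIV_cBS)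
    moreover have "C \<le> std_normal_density (- k / y + y / 2)"
      unfolding C_def using dl y
      by (intro phi_mono_neg d_mono k order.trans[OF d_mono[OF k, of y s] dn]) auto
    ultimately show "\<exists>D. (h has_real_derivative D) (at y) \<and> D \<ge> 0" by force
  qed (use dl in simp)
  moreover have "c_BS k (s - \<delta>) > 0" using dl k by (intro cBS_pos) auto
  ultimately show ?thesis unfolding h_def C_def by (simp add: algebra_simps)
qed

context
  fixes \<mu> :: "real measure" and c :: "real \<Rightarrow> real"
  assumes prob: "prob_space \<mu>" and sets: "sets \<mu> = sets borel"
    and int_exp: "integrable \<mu> exp" and mean: "(\<integral>x. exp x \<partial>\<mu>) = 1"
    and c_def: "c = (\<lambda>k. \<integral>x. indicator {k<..} x * (exp x - exp k) \<partial>\<mu>)"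
begin

lemma meas_mu: "(f :: real \<Rightarrow> real) \<in> borel_measurable borel \<Longrightarrow> f \<in> borel_measurable \<mu>"
  using measurable_cong_sets[OF sets refl, of "borel :: real measure"] by (simp only:)

lemma space_mu: "space \<mu> = UNIV"
  using sets_eq_imp_space_eq[OF sets] by simp

lemma c_integrable: "integrable \<mu> (\<lambda>x. indicator {k<..} x * (exp x - exp k))"
proof (rule Bochner_Integration.integrable_bound[OF int_exp])
  show "(\<lambda>x. indicator {k<..} x * (exp x - exp k)) \<in> borel_measurable \<mu>"
    by (rule meas_mu) measurable
  show "AE x in \<mu>. norm (indicator {k<..} x * (exp x - exp k)) \<le> norm (exp x)"
    by (auto simp: indicator_def)
qed

lemma c_nonneg: "c k \<ge> 0"
  unfolding c_def by (auto intro!: integral_nonneg_AE simp: indicator_def)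

lemma c_antimono:
  assumes "k1 \<le> k2"
  shows "c k2 \<le> c k1"
  unfolding c_def using assms
  by (intro integral_mono c_integrable) (auto simp: indicator_def)

lemma c_lt1: "c k < 1"
proof -
  let ?f = "\<lambda>x. exp x - indicator {k<..} x * (exp x - exp k)"
  have int: "integrable \<mu> ?f" using c_integrable int_exp by auto
  have pos: "?f x > 0" for x by (auto simp: indicator_def)
  have "integral\<^sup>L \<mu> ?f \<ge> 0" using pos by (intro integral_nonneg_AE) (auto intro: less_imp_le)
  moreover have "integral\<^sup>L \<mu> ?f \<noteq> 0"
  proof
    assume "integral\<^sup>L \<mu> ?f = 0"
    then have "AE x in \<mu>. ?f x = 0"
      using integral_nonneg_eq_0_iff_AE[OF int] pos by (auto intro: less_imp_le)
    then have "AE x in \<mu>. False" using pos by (auto elim!: eventually_mono) (metis less_irrefl)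
    then show False using prob_space.AE_False[OF prob] by simp
  qed
  moreover have "integral\<^sup>L \<mu> ?f = 1 - c k"
    using mean c_integrable int_exp unfolding c_def by simp
  ultimately show ?thesis by simp
qed

lemma c_upper:
  assumes eps: "\<epsilon> > 0" and int: "integrable \<mu> (\<lambda>x. exp ((1 + \<epsilon>) * x))"
  shows "c k \<le> (\<integral>x. exp ((1 + \<epsilon>) * x) \<partial>\<mu>) * exp (- \<epsilon> * k)"
proof -
  have "c k \<le> (\<integral>x. exp ((1 + \<epsilon>) * x) * exp (- \<epsilon> * k) \<partial>\<mu>)"
    unfolding c_def
  proof (intro integral_mono c_integrable integrable_mult_left int)
    fix x
    show "indicator {k<..} x * (exp x - exp k) \<le> exp ((1 + \<epsilon>) * x) * exp (- \<epsilon> * k)"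
    proof (cases "k < x")
      case True
      have "exp x - exp k \<le> exp x" by simp
      also have "exp x = exp ((1 + \<epsilon>) * x) * exp (- \<epsilon> * x)" by (simp add: exp_add[symmetric] algebra_simps)
      also have "\<dots> \<le> exp ((1 + \<epsilon>) * x) * exp (- \<epsilon> * k)"
        using True eps by (intro mult_left_mono) auto
      finally show ?thesis using True by simp
    qed simp
  qed
  then show ?thesis by simp
qed

end

lemma c_pos_from_ev:
  fixes c :: "real \<Rightarrow> real"
  assumes nn: "\<And>k. c k \<ge> 0" and am: "\<And>k1 k2. k1 \<le> k2 \<Longrightarrow> c k2 \<le> c k1"
    and ev: "\<forall>\<^sub>F k in at_top. - ln (c k) > 0"
  shows "c k > 0"
proof (rule ccontr)
  assume "\<not> c k > 0"
  then have z: "c k = 0" using nn[of k] by simp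
  from ev obtain K where K: "\<And>x. x \<ge> K \<Longrightarrow> - ln (c x) > 0"
    unfolding eventually_at_top_linorder by auto
  have "c (max K k) = 0" using am[of k "max K k"] nn[of "max K k"] z by simp
  then show False using K[of "max K k"] by simp
qed

lemma poly_bound:
  fixes g :: "real \<Rightarrow> real" and \<alpha> :: real
  assumes mono: "\<And>x y. x \<le> y \<Longrightarrow> g x \<le> g y"
    and ev: "\<forall>\<^sub>F k in at_top. g k > 0"
    and lim: "((\<lambda>x. g (2 * x) / g x) \<longlongrightarrow> 2 powr \<alpha>) at_top"
    and alpha: "\<alpha> \<ge> 0"
  shows "\<exists>A B. \<forall>\<^sub>F k in at_top. ln (g k) \<le> A + B * ln k"
proof -
  define Bq where "Bq = 2 powr \<alpha> + 1"
  have Bq1: "Bq > 1" using alpha unfolding Bq_def by simp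
  have "\<forall>\<^sub>F x in at_top. g (2 * x) / g x < Bq"
    using order_tendstoD(2)[OF lim] unfolding Bq_def by simp
  moreover note ev
  moreover have "\<forall>\<^sub>F x in at_top. (x::real) \<ge> 1" by simp
  ultimately have "\<forall>\<^sub>F x in at_top. g (2 * x) / g x < Bq \<and> g x > 0 \<and> x \<ge> 1"
    by eventually_elim auto
  then obtain x0 where x0: "\<And>x. x \<ge> x0 \<Longrightarrow> g (2 * x) / g x < Bq \<and> g x > 0 \<and> x \<ge> 1"
    unfolding eventually_at_top_linorder by auto
  have x01: "x0 \<ge> 1" and gx0: "g x0 > 0" using x0[of x0] by auto
  have step: "g (2 * x) \<le> Bq * g x" if "x \<ge> x0" for x
    using x0[OF that] by (simp add: divide_less_eq split: if_splits)
  have ind: "g (2 ^ n * x0) \<le> Bq ^ n * g x0" for n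
  proof (induction n)
    case (Suc n)
    have ge: "2 ^ n * x0 \<ge> x0" using x01 by (simp add: mult_le_cancel_right1)
    have "g (2 ^ Suc n * x0) = g (2 * (2 ^ n * x0))" by (simp add: mult.assoc)
    also have "\<dots> \<le> Bq * g (2 ^ n * x0)" using step[OF ge] .
    also have "\<dots> \<le> Bq * (Bq ^ n * g x0)" using Suc Bq1 by (intro mult_left_mono) auto
    finally show ?case by (simp add: mult.assoc)
  qed simp
  define A where "A = ln Bq + ln (g x0)"
  define B where "B = ln Bq / ln 2"
  have "ln (g k) \<le> A + B * ln k" if k: "k \<ge> x0" for k
  proof -
    define n where "n = nat \<lceil>log 2 (k / x0)\<rceil>"
    have kx: "k / x0 \<ge> 1" using k x01 by simp
    have lg: "log 2 (k / x0) \<ge> 0" using kx by simp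
    have "k / x0 = 2 powr (log 2 (k / x0))" using kx by simp
    also have "\<dots> \<le> 2 powr (real n)" unfolding n_def using lg by (intro powr_mono) auto
    also have "\<dots> = 2 ^ n" by (simp add: powr_realpow)
    finally have "k \<le> 2 ^ n * x0" using x01 by (simp add: divide_le_eq)
    then have "g k \<le> g (2 ^ n * x0)" by (rule mono)
    also have "\<dots> \<le> Bq ^ n * g x0" by (rule ind)
    finally have gk: "g k \<le> Bq ^ n * g x0" .
    have gkpos: "g k > 0" using x0[OF k] by simp
    have "ln (g k) \<le> ln (Bq ^ n * g x0)" using gk gkpos by simp
    also have "\<dots> = n * ln Bq + ln (g x0)" using Bq1 gx0 by (simp add: ln_mult ln_realpow)
    also have "real n \<le> log 2 (k / x0) + 1" unfolding n_def using lg by linarith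
    then have "n * ln Bq \<le> (log 2 (k / x0) + 1) * ln Bq" using Bq1 by (intro mult_right_mono) auto
    also have "log 2 (k / x0) \<le> ln k / ln 2"
      using x01 k by (simp add: log_def ln_div divide_right_mono)
    then have "(log 2 (k / x0) + 1) * ln Bq \<le> (ln k / ln 2 + 1) * ln Bq" using Bq1 by (intro mult_right_mono) auto
    finally show ?thesis unfolding A_def B_def by (simp add: algebra_simps)
  qed
  then show ?thesis unfolding eventually_at_top_linorder by blast
qed

lemma d_sq: "s > 0 \<Longrightarrow> (- k / s + s / 2)\<^sup>2 / 2 = k\<^sup>2 / (2 * s\<^sup>2) - k / 2 + s\<^sup>2 / 8"
  for k s :: real
  by (simp add: power2_eq_square field_simps)

lemma ln_phi: "ln (std_normal_density x) = - ln (sqrt (2 * pi)) - x\<^sup>2 / 2"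
  unfolding std_normal_density_def by (simp add: ln_mult ln_div)

lemma cBS_log_upper:
  fixes k s :: real
  assumes k: "k > 0" and s: "s > 0" and sk: "s\<^sup>2 \<le> 2 * k"
  shows "ln (c_BS k s) + (k\<^sup>2 / (2 * s\<^sup>2) - k / 2 + s\<^sup>2 / 8) \<le> ln s - ln (sqrt (2 * pi))"
proof -
  have "ln (c_BS k s) \<le> ln (s * std_normal_density (- k / s + s / 2))"
    using cBS_upper[OF k s sk] cBS_pos[OF k s] by simp
  also have "\<dots> = ln s + ln (std_normal_density (- k / s + s / 2))"
    by (rule ln_mult_pos[OF s phi_pos])
  also have "\<dots> = ln s - ln (sqrt (2 * pi)) - (- k / s + s / 2)\<^sup>2 / 2"
    by (simp only: ln_phi)
  also have "\<dots> = ln s - ln (sqrt (2 * pi)) - (k\<^sup>2 / (2 * s\<^sup>2) - k / 2 + s\<^sup>2 / 8)"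
    using d_sq[OF s, of k] by linarith
  finally show ?thesis by simp
qed

lemma cBS_log_lower:
  fixes k s :: real
  assumes k: "k \<ge> 4" and s: "s > 0" and sk: "s\<^sup>2 \<le> 2 * k"
  shows "ln (c_BS k s) + (k\<^sup>2 / (2 * s\<^sup>2) - k / 2 + s\<^sup>2 / 8) \<ge> 3 * ln s - 2 * ln k - ln (sqrt (2 * pi)) - 4"
proof -
  define \<delta> where "\<delta> = s ^ 3 / k\<^sup>2"
  define \<tau> where "\<tau> = s - \<delta>"
  have k0: "k > 0" using k by simp
  have dpos: "\<delta> > 0" unfolding \<delta>_def using s k by simp
  have sk2: "s\<^sup>2 / k\<^sup>2 \<le> 1/2"
  proof -
    have "s\<^sup>2 / k\<^sup>2 \<le> 2 * k / k\<^sup>2" using sk k0 by (intro divide_right_mono) auto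
    also have "\<dots> = 2 / k" using k0 by (simp add: power2_eq_square)
    also have "\<dots> \<le> 1/2" using k by (simp add: field_simps)
    finally show ?thesis .
  qed
  moreover have "\<delta> = s * (s\<^sup>2 / k\<^sup>2)" unfolding \<delta>_def by (simp add: power3_eq_cube power2_eq_square)
  ultimately have dhalf: "\<delta> \<le> s / 2" using mult_left_mono[OF sk2, of s] s by simp
  have tpos: "\<tau> \<ge> s / 2" "\<tau> > 0" "\<tau> < s" unfolding \<tau>_def using dhalf dpos s by auto
  have low: "\<delta> * std_normal_density (- k / \<tau> + \<tau> / 2) \<le> c_BS k s"
    unfolding \<tau>_def using cBS_lower[OF k0 dpos _ sk] tpos unfolding \<tau>_def by simp
  have key: "k\<^sup>2 / (2 * \<tau>\<^sup>2) \<le> k\<^sup>2 / (2 * s\<^sup>2) + 4"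
  proof -
    have "s\<^sup>2 - \<tau>\<^sup>2 = \<delta> * (2 * s - \<delta>)" unfolding \<tau>_def by (simp add: power2_eq_square algebra_simps)
    also have "\<dots> \<le> 2 * s * \<delta>" using dpos s by (simp add: algebra_simps)
    finally have a: "s\<^sup>2 - \<tau>\<^sup>2 \<le> 2 * s * \<delta>" .
    have b: "s\<^sup>2 / 4 \<le> \<tau>\<^sup>2" using power_mono[OF tpos(1), of 2] s by (simp add: power_divide)
    have "1 / \<tau>\<^sup>2 - 1 / s\<^sup>2 = (s\<^sup>2 - \<tau>\<^sup>2) / (s\<^sup>2 * \<tau>\<^sup>2)" using tpos s by (simp add: field_simps)
    also have "\<dots> \<le> (2 * s * \<delta>) / (s\<^sup>2 * (s\<^sup>2 / 4))"
      using a b s tpos dpos by (intro frac_le mult_left_mono mult_pos_pos) auto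
    also have "\<dots> = 8 / k\<^sup>2" unfolding \<delta>_def using s k0 by (simp add: power2_eq_square power3_eq_cube field_simps)
    finally have "1 / \<tau>\<^sup>2 \<le> 1 / s\<^sup>2 + 8 / k\<^sup>2" by simp
    then have "k\<^sup>2 / 2 * (1 / \<tau>\<^sup>2) \<le> k\<^sup>2 / 2 * (1 / s\<^sup>2 + 8 / k\<^sup>2)" by (intro mult_left_mono) auto
    moreover have "k\<^sup>2 / 2 * (1 / \<tau>\<^sup>2) = k\<^sup>2 / (2 * \<tau>\<^sup>2)" by simp
    moreover have "k\<^sup>2 / 2 * (1 / s\<^sup>2 + 8 / k\<^sup>2) = k\<^sup>2 / (2 * s\<^sup>2) + 4"
      using k0 by (simp add: field_simps)
    ultimately show ?thesis by linarith
  qed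
  have t2: "\<tau>\<^sup>2 / 8 \<le> s\<^sup>2 / 8" using tpos by (simp add: power_mono)
  have "3 * ln s - 2 * ln k - ln (sqrt (2 * pi)) - 4 - (k\<^sup>2 / (2 * s\<^sup>2) - k / 2 + s\<^sup>2 / 8)
      \<le> ln \<delta> - ln (sqrt (2 * pi)) - (k\<^sup>2 / (2 * \<tau>\<^sup>2) - k / 2 + \<tau>\<^sup>2 / 8)"
  proof -
    have "ln \<delta> = 3 * ln s - 2 * ln k" unfolding \<delta>_def using s k0 by (simp add: ln_div ln_realpow)
    then show ?thesis using key t2 by simp
  qed
  also have "\<dots> = ln \<delta> - ln (sqrt (2 * pi)) - (- k / \<tau> + \<tau> / 2)\<^sup>2 / 2"
    using d_sq[OF tpos(2), of k] by linarith
  also have "\<dots> = ln \<delta> + ln (std_normal_density (- k / \<tau> + \<tau> / 2))"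
    by (simp only: ln_phi)
  also have "\<dots> = ln (\<delta> * std_normal_density (- k / \<tau> + \<tau> / 2))"
    by (rule ln_mult_pos[OF dpos phi_pos, symmetric])
  also have "\<dots> \<le> ln (c_BS k s)" using low dpos phi_pos cBS_pos[OF k0 s] by (subst ln_le_cancel_iff) (auto intro: mult_pos_pos)
  finally show ?thesis by simp
qed

definition Aq :: "real \<Rightarrow> real" where "Aq t = 1 + 2 * t + 2 * sqrt (t\<^sup>2 + t)"

lemma psi_root:
  fixes v z :: real
  assumes z: "z \<ge> 0" and v: "0 < v" "v < 2" and eq: "(2 - v)\<^sup>2 / (8 * v) = z"
  shows "v = psi z"
proof -
  define R where "R = sqrt (z\<^sup>2 + z)"
  have R0: "R \<ge> 0" and R2: "R\<^sup>2 = z\<^sup>2 + z" unfolding R_def using z by auto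
  have e: "(2 - v)\<^sup>2 = 8 * v * z" using eq v by (simp add: field_simps)
  have "(v - (2 + 4 * z))\<^sup>2 = (4 * R)\<^sup>2" using e R2 by (simp add: power2_eq_square algebra_simps)
  then have "((2 + 4 * z) - v)\<^sup>2 = (4 * R)\<^sup>2" by (simp add: power2_commute)
  moreover have "(2 + 4 * z) - v \<ge> 0" using v z by simp
  ultimately have "(2 + 4 * z) - v = 4 * R" using R0 power2_eq_iff_nonneg[of "(2 + 4 * z) - v" "4 * R"] by simp
  then have "v = 2 + 4 * z - 4 * R" by simp
  then show ?thesis unfolding psi_def R_def by simp
qed

lemma psi_alt:
  fixes z :: real
  assumes z: "z \<ge> 0"
  shows "psi z = 2 / Aq z"
proof -
  define R where "R = sqrt (z\<^sup>2 + z)"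
  have R0: "R \<ge> 0" and R2: "R\<^sup>2 = z\<^sup>2 + z" unfolding R_def using z by auto
  have "(2 + 4 * z - 4 * R) * (2 + 4 * z + 4 * R) = 4" using R2 by (simp add: power2_eq_square algebra_simps)
  moreover have "2 + 4 * z + 4 * R > 0" using z R0 by simp
  ultimately have "2 + 4 * z - 4 * R = 4 / (2 + 4 * z + 4 * R)" by (simp add: field_simps)
  also have "\<dots> = 2 / (1 + 2 * z + 2 * R)"
  proof -
    have "1 + 2 * z + 2 * R > 0" using z R0 by simp
    then show ?thesis by (simp add: field_simps)
  qed
  finally show ?thesis unfolding psi_def Aq_def R_def by (simp add: algebra_simps)
qed

lemma Aq_ge1: "t \<ge> 0 \<Longrightarrow> Aq t \<ge> 1"
  unfolding Aq_def by simp

lemma sqrt_diff_bound: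
  fixes a b y :: real
  assumes a: "a \<ge> 0" and b: "b \<ge> y\<^sup>2" and y: "y > 0"
  shows "\<bar>sqrt a - sqrt b\<bar> \<le> \<bar>a - b\<bar> / y"
proof -
  have sb: "sqrt b \<ge> y" using b y by (metis abs_of_pos real_sqrt_abs real_sqrt_le_mono)
  have b0: "b \<ge> 0" using b by (meson order.trans zero_le_power2)
  have sp: "sqrt a + sqrt b > 0" using sb y real_sqrt_ge_zero[OF a] by linarith
  have "\<bar>sqrt a - sqrt b\<bar> * (sqrt a + sqrt b) = \<bar>a - b\<bar>"
  proof -
    have "(sqrt a - sqrt b) * (sqrt a + sqrt b) = a - b" using a b y
      using b0 by (simp add: algebra_simps)
    then show ?thesis using sp by (metis abs_mult abs_of_pos)
  qed
  then have "\<bar>sqrt a - sqrt b\<bar> = \<bar>a - b\<bar> / (sqrt a + sqrt b)" using sp by (simp add: field_simps)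
  also have "\<dots> \<le> \<bar>a - b\<bar> / y"
  proof -
    have "y \<le> sqrt a + sqrt b" using sb real_sqrt_ge_zero[OF a] by linarith
    then show ?thesis using y sp by (intro divide_left_mono mult_pos_pos) auto
  qed
  finally show ?thesis .
qed

lemma Aq_diff:
  fixes e y z :: real
  assumes e: "e > 0" and y: "y \<ge> e" and z: "z \<ge> 0"
  shows "\<bar>Aq z - Aq y\<bar> \<le> \<bar>z - y\<bar> * (6 + 2 * (\<bar>z - y\<bar> + 1) / e)"
proof -
  define r where "r = z - y"
  have y0: "y > 0" using e y by simp
  have zz: "z = y + r" unfolding r_def by simp
  have ab: "\<bar>(z\<^sup>2 + z) - (y\<^sup>2 + y)\<bar> \<le> \<bar>r\<bar> * (2 * y + \<bar>r\<bar> + 1)"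
  proof -
    have "(z\<^sup>2 + z) - (y\<^sup>2 + y) = r * (2 * y + r + 1)" unfolding zz by (simp add: power2_eq_square algebra_simps)
    then have "\<bar>(z\<^sup>2 + z) - (y\<^sup>2 + y)\<bar> = \<bar>r\<bar> * \<bar>2 * y + r + 1\<bar>" by (simp add: abs_mult)
    also have "\<dots> \<le> \<bar>r\<bar> * (2 * y + \<bar>r\<bar> + 1)" using y0 by (intro mult_left_mono) auto
    finally show ?thesis .
  qed
  have sq: "\<bar>sqrt (z\<^sup>2 + z) - sqrt (y\<^sup>2 + y)\<bar> \<le> \<bar>r\<bar> * (2 * y + \<bar>r\<bar> + 1) / y"
  proof -
    have "\<bar>sqrt (z\<^sup>2 + z) - sqrt (y\<^sup>2 + y)\<bar> \<le> \<bar>(z\<^sup>2 + z) - (y\<^sup>2 + y)\<bar> / y"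
      using z y0 by (intro sqrt_diff_bound) auto
    also have "\<dots> \<le> \<bar>r\<bar> * (2 * y + \<bar>r\<bar> + 1) / y" using ab y0 by (intro divide_right_mono) auto
    finally show ?thesis .
  qed
  have "\<bar>r\<bar> * (2 * y + \<bar>r\<bar> + 1) / y = \<bar>r\<bar> * (2 + (\<bar>r\<bar> + 1) / y)" using y0 by (simp add: field_simps)
  also have "\<dots> \<le> \<bar>r\<bar> * (2 + (\<bar>r\<bar> + 1) / e)" using y e by (intro mult_left_mono add_left_mono divide_left_mono) auto
  finally have sq2: "\<bar>sqrt (z\<^sup>2 + z) - sqrt (y\<^sup>2 + y)\<bar> \<le> \<bar>r\<bar> * (2 + (\<bar>r\<bar> + 1) / e)" using sq by linarith
  have "\<bar>Aq z - Aq y\<bar> \<le> 2 * \<bar>r\<bar> + 2 * \<bar>sqrt (z\<^sup>2 + z) - sqrt (y\<^sup>2 + y)\<bar>"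
    unfolding Aq_def r_def by (smt (verit))
  also have "\<dots> \<le> 2 * \<bar>r\<bar> + 2 * (\<bar>r\<bar> * (2 + (\<bar>r\<bar> + 1) / e))" using sq2 by simp
  also have "\<dots> = \<bar>r\<bar> * (6 + 2 * (\<bar>r\<bar> + 1) / e)" by (simp add: algebra_simps)
  finally show ?thesis unfolding r_def .
qed

lemma lnk1: "k \<ge> 3 \<Longrightarrow> ln k \<ge> 1" for k :: real
  using exp_le by (subst ln_ge_iff) auto

lemma ln_sqrt2pi: "ln (sqrt (2 * pi)) \<ge> 0" "ln (sqrt (2 * pi)) \<le> 2"
proof -
  have a: "sqrt (2 * pi) \<ge> 1" using pi_gt3 by simp
  then show "ln (sqrt (2 * pi)) \<ge> 0" by simp
  have "sqrt (2 * pi) \<le> sqrt 9" using pi_less_4 by (intro real_sqrt_le_mono) simp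
  also have "sqrt 9 = (3::real)" by simp
  finally have "sqrt (2 * pi) \<le> exp 2" using exp_ge_add_one_self[of 2] by linarith
  then show "ln (sqrt (2 * pi)) \<le> 2" using a by (metis ln_exp ln_le_cancel_iff exp_gt_zero order_less_le_trans zero_less_one)
qed


lemma core:
  fixes k s p g A B :: real
  assumes k: "k \<ge> 4" and s: "s > 0" and sk: "s\<^sup>2 \<le> 2 * k" and p: "p = c_BS k s"
    and g: "g = - ln p" and gpos: "g > 0" and poly: "ln g \<le> A + B * ln k"
  shows "\<bar>ln p + (k\<^sup>2 / (2 * s\<^sup>2) - k / 2 + s\<^sup>2 / 8)\<bar> \<le> (3 * (3 + \<bar>A\<bar> + \<bar>B\<bar>) + 8) * ln k"
proof -
  define L where "L = ln p + (k\<^sup>2 / (2 * s\<^sup>2) - k / 2 + s\<^sup>2 / 8)"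
  define K1 where "K1 = 3 + \<bar>A\<bar> + \<bar>B\<bar>"
  have k0: "k > 0" using k by simp
  have l1: "ln k \<ge> 1" using lnk1 k by simp
  have U: "L \<le> ln s - ln (sqrt (2 * pi))" unfolding L_def p using cBS_log_upper[OF k0 s sk] .
  have Lo: "L \<ge> 3 * ln s - 2 * ln k - ln (sqrt (2 * pi)) - 4" unfolding L_def p using cBS_log_lower[OF k s sk] .
  note sp = ln_sqrt2pi
  have "2 * k \<le> k * k" using mult_right_mono[of 2 k k] k by simp
  then have "s\<^sup>2 \<le> k\<^sup>2" using sk by (simp add: power2_eq_square)
  then have sle: "s \<le> k" using k0 by (rule power2_le_imp_le[OF _ less_imp_le])
  then have lns: "ln s \<le> ln k" by (subst ln_le_cancel_iff[OF s k0])
  have lnkk: "ln k \<le> k" using ln_less_self[OF k0] by linarith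
  define Q where "Q = k\<^sup>2 / (2 * s\<^sup>2)"
  have Qpos: "Q > 0" unfolding Q_def using k0 s by simp
  have "s\<^sup>2 / 8 \<ge> 0" by simp
  then have "Q - k / 2 \<le> L - ln p" unfolding L_def Q_def by simp
  then have "Q \<le> g + ln s + k / 2" using U sp g by linarith
  then have Qb: "Q \<le> g + 2 * k" using lns lnkk k by linarith
  have "ln Q \<le> ln (g + 2 * k)" using Qb Qpos by simp
  also have "g + 2 * k \<le> 2 * max g (2 * k)" by simp
  then have "ln (g + 2 * k) \<le> ln (2 * max g (2 * k))" using gpos k by (subst ln_le_cancel_iff) auto
  also have "ln (2 * max g (2 * k)) = ln 2 + ln (max g (2 * k))" using gpos by (subst ln_mult_pos) auto
  also have "ln (max g (2 * k)) \<le> max (ln g) (ln 2 + ln k)"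
    using gpos k0 by (cases "g \<le> 2 * k") (auto simp: ln_mult_pos)
  finally have lq: "ln Q \<le> ln 2 + max (ln g) (ln 2 + ln k)" by simp
  have lnQ: "ln Q = 2 * ln k - ln 2 - 2 * ln s"
    unfolding Q_def using k0 s by (simp add: ln_div ln_mult ln_realpow)
  have ln2: "ln (2::real) \<le> 1" using ln_le_minus_one[of 2] by simp
  have ln20: "ln (2::real) \<ge> 0" by simp
  have Bk: "B * ln k \<le> \<bar>B\<bar> * ln k" using l1 by (intro mult_right_mono) auto
  have Bk2: "\<bar>B\<bar> \<le> \<bar>B\<bar> * ln k" using l1 by (simp add: mult_le_cancel_left1)
  have Ak: "\<bar>A\<bar> \<le> \<bar>A\<bar> * ln k" using l1 by (simp add: mult_le_cancel_left1)
  have K1e: "K1 * ln k = 3 * ln k + \<bar>A\<bar> * ln k + \<bar>B\<bar> * ln k" unfolding K1_def by (simp add: algebra_simps)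
  have mx: "max (ln g) (ln 2 + ln k) \<le> \<bar>A\<bar> + \<bar>B\<bar> * ln k + 1 + ln k"
  proof (rule max.boundedI)
    show "ln g \<le> \<bar>A\<bar> + \<bar>B\<bar> * ln k + 1 + ln k" using poly Bk l1 by linarith
    show "ln 2 + ln k \<le> \<bar>A\<bar> + \<bar>B\<bar> * ln k + 1 + ln k" using ln2 l1 by (smt (verit) abs_ge_zero mult_nonneg_nonneg)
  qed
  have nls: "- ln s \<le> K1 * ln k"
    using lq lnQ mx ln2 ln20 l1 Bk2 Ak K1e by linarith
  have up: "L \<le> ln k" using U sp lns by linarith
  have lo: "L \<ge> - (3 * K1 + 8) * ln k"
  proof -
    have "3 * ln s \<ge> - 3 * (K1 * ln k)" using nls by linarith
    moreover have "- (3 * K1 + 8) * ln k = - 3 * (K1 * ln k) - 8 * ln k" by (simp add: algebra_simps)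
    ultimately show ?thesis using Lo sp l1 by linarith
  qed
  have "K1 \<ge> 0" unfolding K1_def by simp
  then have "ln k \<le> (3 * K1 + 8) * ln k" using l1 by (simp add: algebra_simps)
  then have "\<bar>L\<bar> \<le> (3 * K1 + 8) * ln k" using up lo by linarith
  then show ?thesis unfolding L_def K1_def .
qed

lemma stepA:
  fixes k s \<epsilon> \<eta> lnM :: real
  assumes k: "k \<ge> 4" and eta: "0 < \<eta>" "\<eta> \<le> 1" "\<eta> \<le> \<epsilon>" and s: "s > 0"
    and big: "(2 - \<eta>) * k < s\<^sup>2" and up: "ln (c_BS k s) \<le> lnM - \<epsilon> * k"
  shows "\<epsilon> * k * 7 / 8 \<le> lnM + 6 + ln k / 2"
proof -
  define \<sigma> where "\<sigma> = sqrt ((2 - \<eta>) * k)"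
  have k0: "k > 0" using k by simp
  have xpos: "(2 - \<eta>) * k > 0" using eta k0 by simp
  have sig: "\<sigma> > 0" "\<sigma>\<^sup>2 = (2 - \<eta>) * k" unfolding \<sigma>_def using xpos by auto
  have sk: "\<sigma>\<^sup>2 \<le> 2 * k" using sig eta k0 by simp
  have "\<sigma> < s" using big sig s by (simp add: power_less_imp_less_base[of \<sigma> 2 s])
  then have "c_BS k \<sigma> \<le> c_BS k s" using sig by (intro cBS_mono) auto
  then have l1: "ln (c_BS k \<sigma>) \<le> ln (c_BS k s)" using cBS_pos[OF k0 sig(1)] by simp
  have lo: "ln (c_BS k \<sigma>) + (k\<^sup>2 / (2 * \<sigma>\<^sup>2) - k / 2 + \<sigma>\<^sup>2 / 8) \<ge> 3 * ln \<sigma> - 2 * ln k - ln (sqrt (2 * pi)) - 4"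
    by (rule cBS_log_lower[OF k sig(1) sk])
  have D: "k\<^sup>2 / (2 * \<sigma>\<^sup>2) - k / 2 + \<sigma>\<^sup>2 / 8 = k * \<eta>\<^sup>2 / (8 * (2 - \<eta>))"
    unfolding sig(2) using eta k0 by (simp add: field_simps power2_eq_square)
  have "\<eta>\<^sup>2 / (8 * (2 - \<eta>)) \<le> \<eta> / 8"
  proof -
    have "\<eta>\<^sup>2 \<le> \<eta> * (2 - \<eta>)" using eta by (simp add: power2_eq_square mult_left_mono)
    then show ?thesis using eta by (simp add: field_simps)
  qed
  then have "k * (\<eta>\<^sup>2 / (8 * (2 - \<eta>))) \<le> k * (\<epsilon> / 8)" using eta k0 by (intro mult_left_mono) auto
  then have D2: "k\<^sup>2 / (2 * \<sigma>\<^sup>2) - k / 2 + \<sigma>\<^sup>2 / 8 \<le> \<epsilon> * k / 8" unfolding D by (simp add: mult.commute)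
  have "ln \<sigma> = ln ((2 - \<eta>) * k) / 2" unfolding \<sigma>_def using xpos by (simp add: ln_sqrt)
  moreover have "ln ((2 - \<eta>) * k) \<ge> ln k" using eta k0 xpos by (subst ln_le_cancel_iff) auto
  ultimately have "3 * ln \<sigma> \<ge> 3 / 2 * ln k" by simp
  then show ?thesis using l1 lo D2 up ln_sqrt2pi by simp
qed

theorem lemma3:
  fixes \<mu> :: "real measure" and c V :: "real \<Rightarrow> real" and \<alpha> :: real
  assumes prob: "prob_space \<mu>" and sets: "sets \<mu> = sets borel"
    and int_exp: "integrable \<mu> exp" and mean: "(\<integral>x. exp x \<partial>\<mu>) = 1"
    and moment: "\<exists>\<epsilon>>0. integrable \<mu> (\<lambda>x. exp ((1 + \<epsilon>) * x))"
    and c_def: "c = (\<lambda>k. \<integral>x. indicator {k<..} x * (exp x - exp k) \<partial>\<mu>)"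
    and V_def: "V = (\<lambda>k. implied_vol k (c k))"
    and alpha: "\<alpha> \<ge> 1" and RV: "regvar \<alpha> (\<lambda>k. - ln (c k))"
  shows "((\<lambda>k. ln (c k) / k - (- k / (2 * (V k)\<^sup>2) + 1 / 2 - (V k)\<^sup>2 / (8 * k)))
           \<in> O[at_top](\<lambda>k. ln k / k)) \<and>
         ((\<lambda>k. (V k)\<^sup>2 / k) \<sim>[at_top] (\<lambda>k. psi (- ln (c k) / k)))"
proof -
  obtain \<epsilon> where eps: "\<epsilon> > 0" and ie: "integrable \<mu> (\<lambda>x. exp ((1 + \<epsilon>) * x))" using moment by auto
  define M where "M = (\<integral>x. exp ((1 + \<epsilon>) * x) \<partial>\<mu>)"
  have cnn: "\<And>k. c k \<ge> 0" using c_nonneg[OF prob sets int_exp mean c_def] .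
  have cam: "\<And>k1 k2. k1 \<le> k2 \<Longrightarrow> c k2 \<le> c k1" using c_antimono[OF prob sets int_exp mean c_def] .
  have clt1: "\<And>k. c k < 1" using c_lt1[OF prob sets int_exp mean c_def] .
  have cup: "\<And>k. c k \<le> M * exp (- \<epsilon> * k)"
    unfolding M_def using c_upper[OF prob sets int_exp mean c_def eps ie] .
  have evg: "\<forall>\<^sub>F k in at_top. - ln (c k) > 0" using RV unfolding regvar_def by auto
  have lim2: "((\<lambda>x. - ln (c (2 * x)) / - ln (c x)) \<longlongrightarrow> 2 powr \<alpha>) at_top"
    using RV unfolding regvar_def by auto
  have cpos: "\<And>k. c k > 0" using c_pos_from_ev[OF cnn cam evg] .
  have gmono: "\<And>x y. x \<le> y \<Longrightarrow> - ln (c x) \<le> - ln (c y)" using cam cpos by simp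
  obtain A B where poly: "\<forall>\<^sub>F k in at_top. ln (- ln (c k)) \<le> A + B * ln k"
    using poly_bound[OF gmono evg lim2] alpha by auto
  have Mpos: "M > 0" using cup[of 0] cpos[of 0] by simp
  have Vok: "\<And>k. k > 0 \<Longrightarrow> V k > 0 \<and> c_BS k (V k) = c k"
    unfolding V_def using implied_vol_ok cpos clt1 by blast
  have lnc_up: "ln (c k) \<le> ln M - \<epsilon> * k" for k
  proof -
    have "ln (c k) \<le> ln (M * exp (- \<epsilon> * k))" using cup[of k] cpos[of k] Mpos by simp
    also have "\<dots> = ln M - \<epsilon> * k" using Mpos by (simp add: ln_mult_pos)
    finally show ?thesis .
  qed
  define \<eta> where "\<eta> = min 1 \<epsilon>"
  have eta: "0 < \<eta>" "\<eta> \<le> 1" "\<eta> \<le> \<epsilon>" using eps by (auto simp: \<eta>_def)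
  have ev4: "\<forall>\<^sub>F k in at_top. (k::real) \<ge> 4" by simp
  have evbig: "\<forall>\<^sub>F k in at_top. ln M + 6 + ln k / 2 < \<epsilon> * k * 7 / 8" using eps by real_asymp
  have evA: "\<forall>\<^sub>F k in at_top. (V k)\<^sup>2 \<le> (2 - \<eta>) * k"
    using ev4 evbig
  proof eventually_elim
    case (elim k)
    have Vk: "V k > 0" "c_BS k (V k) = c k" using Vok[of k] elim by auto
    show ?case
    proof (rule ccontr)
      assume "\<not> ?thesis"
      then have big: "(2 - \<eta>) * k < (V k)\<^sup>2" by simp
      have "ln (c_BS k (V k)) \<le> ln M - \<epsilon> * k" using Vk lnc_up[of k] by simp
      from stepA[OF elim(1) eta Vk(1) big this] elim(2) show False by simp
    qed
  qed
  define K where "K = 3 * (3 + \<bar>A\<bar> + \<bar>B\<bar>) + 8"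
  define L where "L = (\<lambda>k. ln (c k) + (k\<^sup>2 / (2 * (V k)\<^sup>2) - k / 2 + (V k)\<^sup>2 / 8))"
  have evL: "\<forall>\<^sub>F k in at_top. \<bar>L k\<bar> \<le> K * ln k"
    using ev4 evA poly evg
  proof eventually_elim
    case (elim k)
    have Vk: "V k > 0" "c k = c_BS k (V k)" using Vok[of k] elim by auto
    have "\<eta> * k \<ge> 0" using eta elim(1) by simp
    moreover have "(2 - \<eta>) * k = 2 * k - \<eta> * k" by (simp add: algebra_simps)
    ultimately have sk: "(V k)\<^sup>2 \<le> 2 * k" using elim(2) by linarith
    show ?case unfolding L_def K_def
      by (rule core[OF elim(1) Vk(1) sk Vk(2) refl elim(4) elim(3)])
  qed
  have evL2: "\<forall>\<^sub>F k in at_top. norm (L k / k) \<le> K * norm (ln k / k)"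
    using evL ev4
  proof eventually_elim
    case (elim k)
    have "ln k \<ge> 0" using elim(2) by simp
    then show ?case using elim by (simp add: abs_div field_simps)
  qed
  have part1: "(\<lambda>k. ln (c k) / k - (- k / (2 * (V k)\<^sup>2) + 1 / 2 - (V k)\<^sup>2 / (8 * k))) \<in> O[at_top](\<lambda>k. ln k / k)"
  proof (rule bigoI[where c = K])
    show "\<forall>\<^sub>F k in at_top. norm (ln (c k) / k - (- k / (2 * (V k)\<^sup>2) + 1 / 2 - (V k)\<^sup>2 / (8 * k))) \<le> K * norm (ln k / k)"
      using evL2 ev4
    proof eventually_elim
      case (elim k)
      have "V k > 0" using Vok[of k] elim by auto
      then have "ln (c k) / k - (- k / (2 * (V k)\<^sup>2) + 1 / 2 - (V k)\<^sup>2 / (8 * k)) = L k / k"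
        unfolding L_def using elim(2) by (simp add: field_simps power2_eq_square)
      then show ?case using elim(1) by simp
    qed
  qed
  show ?thesis
  proof
    show "(\<lambda>k. ln (c k) / k - (- k / (2 * (V k)\<^sup>2) + 1 / 2 - (V k)\<^sup>2 / (8 * k))) \<in> O[at_top](\<lambda>k. ln k / k)"
      by (rule part1)
    define r where "r = (\<lambda>k. L k / k)"
    define y where "y = (\<lambda>k. - ln (c k) / k)"
    define z where "z = (\<lambda>k. y k + r k)"
    define e where "e = \<epsilon> / 2"
    have e0: "e > 0" using eps by (simp add: e_def)
    have r0: "(r \<longlongrightarrow> 0) at_top"
    proof (rule Lim_null_comparison)
      show "\<forall>\<^sub>F k in at_top. norm (r k) \<le> K * (ln k / k)"
        using evL2 ev4 by eventually_elim (simp add: r_def)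
      have "((\<lambda>k::real. ln k / k) \<longlongrightarrow> 0) at_top" by real_asymp
      then show "((\<lambda>k. K * (ln k / k)) \<longlongrightarrow> 0) at_top" by (rule tendsto_mult_right_zero)
    qed
    have evsmall: "\<forall>\<^sub>F k in at_top. ln M / k \<le> e" using e0 by real_asymp
    have evy: "\<forall>\<^sub>F k in at_top. y k \<ge> e"
      using evsmall ev4
    proof eventually_elim
      case (elim k)
      have "- ln (c k) \<ge> \<epsilon> * k - ln M" using lnc_up[of k] by simp
      then have "y k \<ge> (\<epsilon> * k - ln M) / k" unfolding y_def using elim(2) by (intro divide_right_mono) auto
      also have "(\<epsilon> * k - ln M) / k = \<epsilon> - ln M / k" using elim(2) by (simp add: field_simps)
      finally show ?case using elim(1) by (simp add: e_def)
    qed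
    have evkey: "\<forall>\<^sub>F k in at_top. (V k)\<^sup>2 / k / psi (y k) = Aq (y k) / Aq (z k) \<and>
        \<bar>Aq (z k) - Aq (y k)\<bar> \<le> \<bar>r k\<bar> * (6 + 2 * (\<bar>r k\<bar> + 1) / e)"
      using ev4 evA evy
    proof eventually_elim
      case (elim k)
      define v where "v = (V k)\<^sup>2 / k"
      have k0: "k > 0" using elim(1) by simp
      have Vk: "V k > 0" using Vok[of k] k0 by auto
      have v0: "v > 0" unfolding v_def using Vk k0 by simp
      have v2: "v < 2"
      proof -
        have "v \<le> (2 - \<eta>) * k / k" unfolding v_def using elim(2) k0 by (intro divide_right_mono) auto
        then show ?thesis using k0 eta by simp
      qed
      have zD: "z k = (k\<^sup>2 / (2 * (V k)\<^sup>2) - k / 2 + (V k)\<^sup>2 / 8) / k"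
        unfolding z_def y_def r_def L_def using k0 by (simp add: field_simps)
      have zv: "(2 - v)\<^sup>2 / (8 * v) = z k"
        unfolding zD v_def using k0 Vk by (simp add: field_simps power2_eq_square)
      have dd: "k\<^sup>2 / (2 * (V k)\<^sup>2) - k / 2 + (V k)\<^sup>2 / 8 = (- k / V k + V k / 2)\<^sup>2 / 2"
        using d_sq[OF Vk, of k] by simp
      have "(- k / V k + V k / 2)\<^sup>2 / 2 \<ge> 0" by simp
      then have "k\<^sup>2 / (2 * (V k)\<^sup>2) - k / 2 + (V k)\<^sup>2 / 8 \<ge> 0" using dd by linarith
      then have z0: "z k \<ge> 0" unfolding zD using k0 by simp
      have vpsi: "v = psi (z k)" by (rule psi_root[OF z0 v0 v2 zv])
      have y0: "y k \<ge> 0" using elim(3) e0 by simp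
      have A1: "Aq (z k) \<ge> 1" "Aq (y k) \<ge> 1" using Aq_ge1 z0 y0 by auto
      have "v / psi (y k) = (2 / Aq (z k)) / (2 / Aq (y k))"
        using vpsi psi_alt[OF z0] psi_alt[OF y0] by simp
      also have "\<dots> = Aq (y k) / Aq (z k)" using A1 by (simp add: field_simps)
      finally have eq1: "(V k)\<^sup>2 / k / psi (y k) = Aq (y k) / Aq (z k)" unfolding v_def .
      have "\<bar>Aq (z k) - Aq (y k)\<bar> \<le> \<bar>z k - y k\<bar> * (6 + 2 * (\<bar>z k - y k\<bar> + 1) / e)"
        by (rule Aq_diff[OF e0 elim(3) z0])
      then have eq2: "\<bar>Aq (z k) - Aq (y k)\<bar> \<le> \<bar>r k\<bar> * (6 + 2 * (\<bar>r k\<bar> + 1) / e)"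
        unfolding z_def by simp
      show ?case using eq1 eq2 by simp
    qed
    define b where "b = (\<lambda>k. \<bar>r k\<bar> * (6 + 2 * (\<bar>r k\<bar> + 1) / e))"
    have b0: "(b \<longlongrightarrow> 0) at_top"
    proof -
      have "(b \<longlongrightarrow> \<bar>0\<bar> * (6 + 2 * (\<bar>0\<bar> + 1) / e)) at_top"
        unfolding b_def by (intro tendsto_intros r0) (use e0 in simp)
      then show ?thesis by simp
    qed
    have q0: "((\<lambda>k. Aq (z k) / Aq (y k) - 1) \<longlongrightarrow> 0) at_top"
    proof (rule Lim_null_comparison[OF _ b0])
      show "\<forall>\<^sub>F k in at_top. norm (Aq (z k) / Aq (y k) - 1) \<le> b k"
        using evkey evy
      proof eventually_elim
        case (elim k)
        have y0: "y k \<ge> 0" using elim(2) e0 by simp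
        have A1: "Aq (y k) \<ge> 1" using Aq_ge1 y0 by auto
        have "Aq (z k) / Aq (y k) - 1 = (Aq (z k) - Aq (y k)) / Aq (y k)" using A1 by (simp add: field_simps)
        then have "norm (Aq (z k) / Aq (y k) - 1) = \<bar>Aq (z k) - Aq (y k)\<bar> / Aq (y k)" using A1 by simp
        also have "\<dots> \<le> \<bar>Aq (z k) - Aq (y k)\<bar>" using A1 by (simp add: divide_le_eq mult_le_cancel_left1)
        also have "\<dots> \<le> b k" unfolding b_def using elim(1) by simp
        finally show ?case .
      qed
    qed
    have q1: "((\<lambda>k. Aq (z k) / Aq (y k)) \<longlongrightarrow> 1) at_top"
    proof -
      have "((\<lambda>k. (Aq (z k) / Aq (y k) - 1) + 1) \<longlongrightarrow> 0 + 1) at_top" by (intro tendsto_intros q0)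
      then show ?thesis by simp
    qed
    have q2: "((\<lambda>k. inverse (Aq (z k) / Aq (y k))) \<longlongrightarrow> inverse 1) at_top"
      by (intro tendsto_inverse q1) simp
    have q3: "((\<lambda>k. (V k)\<^sup>2 / k / psi (y k)) \<longlongrightarrow> 1) at_top"
    proof -
      have "\<forall>\<^sub>F k in at_top. inverse (Aq (z k) / Aq (y k)) = (V k)\<^sup>2 / k / psi (y k)"
        using evkey by eventually_elim simp
      from tendsto_cong[OF this] q2 show ?thesis by simp
    qed
    show "(\<lambda>k. (V k)\<^sup>2 / k) \<sim>[at_top] (\<lambda>k. psi (- ln (c k) / k))"
      by (rule asymp_equivI') (use q3 in \<open>simp add: y_def\<close>)
  qed
qed

end
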